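(* Fix $\alpha,\beta\in[0,1)$ with $\alpha+\beta<1$. For each $n$ let $k=k_n$, $l=l_n$ be integers with $\liminf_{n\to\infty} l_n/n>\beta$ and $\limsup_{n\to\infty}(k_n+l_n)/n<1-\alpha$, i.e. the code rates $R_0=l/n$, $R_1=k/n$ eventually satisfy $R_0>\beta$ and $R_0+R_1<1-\alpha$ with margins bounded away from $0$. Let $\widetilde G=[G_1\ G_0]$ be an $n\times(k+l)$ binary matrix with i.i.d. uniform entries ($G_1$ its first $k$ columns, $G_0$ its last $l$ columns), and let $\mathbf m\in\{0,1\}^k$ be arbitrary. Then, for the binary defect and erasure channel with the encoding and decoding described in the context, the probability of recovery failure $P(\widehat{\mathbf m}\neq\mathbf m)$ tends to $0$ as $n\to\infty$.
   Context: All arithmetic is over $\mathrm{GF}(2)$. Binary defect and erasure channel (BDEC) with parameters $(\beta,\alpha)$: each of the $n$ cells is independently defective with probability $\beta$; a defective cell is stuck at $0$ or $1$, each with probability $1/2$, independently. Writing codeword $\mathbf c$ stores $\mathbf c\circ\mathbf s$, where $(\mathbf c\circ\mathbf s)_i=s_i$ if cell $i$ is defective with stuck-at value $s_i$ and $=c_i$ otherwise. Then each of the $n$ stored bits is independently erased with probability $\alpha$ (independently of everything else); $\mathcal V$ is the set of unerased positions and the decoder observes $\mathcal V$ and $\mathbf y^{\mathcal V}=(\mathbf c\circ\mathbf s)^{\mathcal V}$. For a matrix/vector, superscript $\mathcal A$ denotes the rows indexed by the set $\mathcal A$. Encoding: with $\mathcal U$ the set of defects and $\mathbf b^{\mathcal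 U}=(G_1\mathbf m)^{\mathcal U}+\mathbf s^{\mathcal U}$, find $\mathbf d\in\{0,1\}^l$ with $G_0^{\mathcal U}\mathbf d=\mathbf b^{\mathcal U}$ and write $\mathbf c=G_1\mathbf m+G_0\mathbf d$; encoding failure ($E=0$) if no such $\mathbf d$ exists. Decoding: solve $\widetilde G^{\mathcal V}\binom{\widehat{\mathbf m}}{\widehat{\mathbf d}}=\mathbf y^{\mathcal V}$. The event $\{\widehat{\mathbf m}\neq\mathbf m\}$ (recovery failure) is declared if encoding fails, or if the solution set of this linear system contains vectors with different message parts $\widehat{\mathbf m}$, or does not contain $(\mathbf m,\mathbf d)$. *)

theory Defs
  imports "HOL-Probability.Probability" "HOL-Library.Z2"
begin

text \<open>Binary vectors of length k over GF(2) (type bit), as functions nat => bit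
  that vanish outside {0..<k}; binary n x N matrices likewise.\<close>

definition vecs :: "nat \<Rightarrow> (nat \<Rightarrow> bit) set" where
  "vecs k = {v. \<forall>i\<ge>k. v i = 0}"

definition mats :: "nat \<Rightarrow> nat \<Rightarrow> (nat \<Rightarrow> nat \<Rightarrow> bit) set" where
  "mats n N = {G. \<forall>i j. (n \<le> i \<or> N \<le> j) \<longrightarrow> G i j = 0}"

text \<open>G1 = first k columns of G, G0 = last l columns (columns k..k+l-1).\<close>
definition G1_mul :: "(nat \<Rightarrow> nat \<Rightarrow> bit) \<Rightarrow> nat \<Rightarrow> (nat \<Rightarrow> bit) \<Rightarrow> nat \<Rightarrow> bit" where
  "G1_mul G k m i = (\<Sum>j<k. G i j * m j)"

definition G0_mul :: "(nat \<Rightarrow> nat \<Rightarrow> bit) \<Rightarrow> nat \<Rightarrow> nat \<Rightarrow> (nat \<Rightarrow> bit) \<Rightarrow> nat \<Rightarrow> bit" where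
  "G0_mul G k l d i = (\<Sum>j<l. G i (k + j) * d j)"

text \<open>State of a cell: (defective, stuck-at value, erased).\<close>
type_synonym cell = "bool \<times> bit \<times> bool"

definition cell_pmf :: "real \<Rightarrow> real \<Rightarrow> cell pmf" where
  "cell_pmf \<beta> \<alpha> =
     do { df \<leftarrow> bernoulli_pmf \<beta>;
          s \<leftarrow> pmf_of_set (UNIV :: bit set);
          er \<leftarrow> bernoulli_pmf \<alpha>;
          return_pmf (df, s, er) }"

definition bdec_space :: "real \<Rightarrow> real \<Rightarrow> nat \<Rightarrow> nat \<Rightarrow> nat \<Rightarrow>
    ((nat \<Rightarrow> nat \<Rightarrow> bit) \<times> (nat \<Rightarrow> cell)) pmf" where
  "bdec_space \<beta> \<alpha> n k l =
     pair_pmf (pmf_of_set (mats n (k + l))) (Pi_pmf {..<n} (False, 0, False) (\<lambda>_. cell_pmf \<beta> \<alpha>))"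

definition recovery_failure ::
  "nat \<Rightarrow> nat \<Rightarrow> nat \<Rightarrow> (nat \<Rightarrow> bit) \<Rightarrow> (nat \<Rightarrow> nat \<Rightarrow> bit) \<Rightarrow> (nat \<Rightarrow> cell) \<Rightarrow> bool" where
  "recovery_failure n k l m G st =
    (let U = {i. i < n \<and> fst (st i)};
         s = (\<lambda>i. fst (snd (st i)));
         V = {i. i < n \<and> \<not> snd (snd (st i))};
         b = (\<lambda>i. G1_mul G k m i + s i);
         enc_ok = (\<exists>d\<in>vecs l. \<forall>i\<in>U. G0_mul G k l d i = b i);
         d = (SOME d. d \<in> vecs l \<and> (\<forall>i\<in>U. G0_mul G k l d i = b i));
         c = (\<lambda>i. G1_mul G k m i + G0_mul G k l d i);
         stored = (\<lambda>i. if i \<in> U then s i else c i);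
         Sol = {(m', d'). m' \<in> vecs k \<and> d' \<in> vecs l \<and>
                  (\<forall>i\<in>V. G1_mul G k m' i + G0_mul G k l d' i = stored i)}
     in \<not> enc_ok \<or> (\<exists>x\<in>Sol. \<exists>x'\<in>Sol. fst x \<noteq> fst x') \<or> (m, d) \<notin> Sol)"

definition failure_prob :: "real \<Rightarrow> real \<Rightarrow> nat \<Rightarrow> nat \<Rightarrow> nat \<Rightarrow> (nat \<Rightarrow> bit) \<Rightarrow> real" where
  "failure_prob \<beta> \<alpha> n k l m =
     measure_pmf.prob (bdec_space \<beta> \<alpha> n k l)
       {(G, st). recovery_failure n k l m G st}"

end

theory Submission
  imports Defs
begin


lemma bit_add_self[simp]: "(a::bit) + a = 0" by (cases a) auto
lemma bit_add_cancel: "(a::bit) + b + b = a" by (cases a; cases b) auto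
lemma bit_UNIV: "(UNIV :: bit set) = {0,1}" by (auto intro: bit.exhaust)
lemma finite_bit[simp]: "finite (UNIV :: bit set)" by (simp add: bit_UNIV)
lemma card_bit: "card (UNIV :: bit set) = 2" by (simp add: bit_UNIV)

definition zf :: "'a set \<Rightarrow> ('a \<Rightarrow> bit) set" where
  "zf A = {f. \<forall>x. x \<notin> A \<longrightarrow> f x = 0}"

lemma zf_PiE: "zf A = PiE_dflt A 0 (\<lambda>_. UNIV)"
  by (auto simp: zf_def PiE_dflt_def)

lemma finite_zf: "finite A \<Longrightarrow> finite (zf A)"
  unfolding zf_PiE by (rule finite_PiE_dflt) auto

lemma card_zf: "finite A \<Longrightarrow> card (zf A) = 2 ^ card A"
  unfolding zf_PiE by (subst card_PiE_dflt) (auto simp: card_bit)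

lemma vecs_zf: "vecs k = zf {..<k}"
  by (auto simp: vecs_def zf_def)

lemma finite_vecs: "finite (vecs k)" by (simp add: vecs_zf finite_zf)
lemma card_vecs: "card (vecs k) = 2 ^ k" by (simp add: vecs_zf card_zf)

lemma mats_sub: "mats n N \<subseteq> (\<lambda>F i j. F (i,j)) ` zf ({..<n} \<times> {..<N})"
proof
  fix G assume G: "G \<in> mats n N"
  have "G = (\<lambda>F i j. F (i,j)) (\<lambda>(i,j). G i j)" by simp
  moreover have "(\<lambda>(i,j). G i j) \<in> zf ({..<n} \<times> {..<N})"
    using G by (auto simp: zf_def mats_def)
  ultimately show "G \<in> (\<lambda>F i j. F (i,j)) ` zf ({..<n} \<times> {..<N})" by blast
qed

lemma finite_mats: "finite (mats n N)"
  by (rule finite_subset[OF mats_sub]) (simp add: finite_zf)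

lemma mats_ne: "mats n N \<noteq> {}"
proof -
  have "(\<lambda>_ _. 0) \<in> mats n N" by (simp add: mats_def)
  thus ?thesis by blast
qed

lemma sum_update_col:
  assumes "jj < (N::nat)"
  shows "(\<Sum>j<N. (if j = jj then a j + d else a j) * x j) = (\<Sum>j<N. a j * x j) + d * (x jj::bit)"
proof -
  have "(\<Sum>j<N. (if j = jj then a j + d else a j) * x j) = (\<Sum>j<N. a j * x j + (if j = jj then d * x j else 0))"
    by (intro sum.cong) (auto simp: distrib_right simp del: add_bit_eq_xor mult_bit_eq_and)
  also have "\<dots> = (\<Sum>j<N. a j * x j) + d * x jj"
    using assms by (simp only: sum.distrib) (subst sum.delta, simp_all)
  finally show ?thesis .
qed

lemma KL:
  assumes x0: "x jj = 1" and jj: "jj < N" and R: "R \<subseteq> {..<n}"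
  shows "card {G \<in> mats n N. \<forall>i\<in>R. (\<Sum>j<N. G i j * x j) = 0} * 2 ^ card R = card (mats n N)"
proof -
  define E where "E = {G \<in> mats n N. \<forall>i\<in>R. (\<Sum>j<N. G i j * x j) = 0}"
  define f where "f = (\<lambda>(G::nat\<Rightarrow>nat\<Rightarrow>bit, c::nat\<Rightarrow>bit) i j. if j = jj then G i j + c i else G i j)"
  have finR: "finite R" using R finite_subset by blast
  have rs: "(\<Sum>j<N. f (G,c) i j * x j) = (\<Sum>j<N. G i j * x j) + c i" for G c i
    unfolding f_def using sum_update_col[OF jj, of "G i" "c i" x] x0 by simp
  have inj: "inj_on f (E \<times> zf R)"
  proof (rule inj_onI)
    fix p q
    assume p: "p \<in> E \<times> zf R" and q: "q \<in> E \<times> zf R" and eqp: "f p = f q"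
    obtain G c where pc: "p = (G, c)" by (cases p)
    obtain G' c' where qc: "q = (G', c')" by (cases q)
    have G: "(G, c) \<in> E \<times> zf R" and G': "(G', c') \<in> E \<times> zf R" and eq: "f (G, c) = f (G', c')"
      using p q eqp pc qc by auto
    have cc: "c = c'"
    proof
      fix i show "c i = c' i"
      proof (cases "i \<in> R")
        case True
        have "(\<Sum>j<N. f (G,c) i j * x j) = (\<Sum>j<N. f (G',c') i j * x j)" using eq by simp
        thus ?thesis using G G' True by (simp add: rs E_def del: add_bit_eq_xor mult_bit_eq_and)
      next
        case False thus ?thesis using G G' by (auto simp: zf_def)
      qed
    qed
    have "G = G'"
    proof (rule ext, rule ext)
      fix i j
      have "f (G, c) i j = f (G', c') i j" using eq by simp
      thus "G i j = G' i j" using cc unfolding f_def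
        by (cases "j = jj") (auto simp del: add_bit_eq_xor mult_bit_eq_and dest: add_right_imp_eq)
    qed
    thus "p = q" using cc pc qc by simp
  qed
  have img: "f ` (E \<times> zf R) = mats n N"
  proof
    show "f ` (E \<times> zf R) \<subseteq> mats n N"
    proof clarify
      fix G c assume G: "G \<in> E" "c \<in> zf R"
      show "f (G, c) \<in> mats n N"
        unfolding mats_def
      proof (intro CollectI allI impI)
        fix i j assume "n \<le> i \<or> N \<le> j"
        moreover have "i \<notin> R" if "n \<le> i" using R that by auto
        ultimately show "f (G, c) i j = 0" using G jj
          by (auto simp: f_def E_def mats_def zf_def)
      qed
    qed
  next
    show "mats n N \<subseteq> f ` (E \<times> zf R)"
    proof
      fix H assume H: "H \<in> mats n N"
      define c where "c = (\<lambda>i. if i \<in> R then (\<Sum>j<N. H i j * x j) else 0)"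
      define G where "G = f (H, c)"
      have cz: "c \<in> zf R" by (simp add: c_def zf_def)
      have GE: "G \<in> E"
      proof -
        have "G \<in> mats n N"
          unfolding mats_def
        proof (intro CollectI allI impI)
          fix i j assume "n \<le> i \<or> N \<le> j"
          moreover have "i \<notin> R" if "n \<le> i" using R that by auto
          ultimately show "G i j = 0" using H jj
            by (auto simp: G_def f_def c_def mats_def)
        qed
        moreover have "(\<Sum>j<N. G i j * x j) = 0" if "i \<in> R" for i
          unfolding G_def rs using that by (simp add: c_def del: add_bit_eq_xor mult_bit_eq_and)
        ultimately show ?thesis by (simp add: E_def)
      qed
      have "f (G, c) = H"
        by (auto simp: G_def f_def bit_add_cancel simp del: add_bit_eq_xor mult_bit_eq_and intro!: ext)
      thus "H \<in> f ` (E \<times> zf R)" using GE cz by (metis SigmaI image_eqI)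
    qed
  qed
  have "card (mats n N) = card (E \<times> zf R)"
    using card_image[OF inj] img by simp
  also have "\<dots> = card E * 2 ^ card R"
    by (simp add: card_cartesian_product card_zf finR)
  finally show ?thesis by (simp add: E_def)
qed




definition addv :: "(nat \<Rightarrow> bit) \<Rightarrow> (nat \<Rightarrow> bit) \<Rightarrow> nat \<Rightarrow> bit" where
  "addv d e = (\<lambda>j. d j + e j)"

definition Aop :: "(nat \<Rightarrow> nat \<Rightarrow> bit) \<Rightarrow> nat \<Rightarrow> nat \<Rightarrow> nat set \<Rightarrow> (nat \<Rightarrow> bit) \<Rightarrow> nat \<Rightarrow> bit" where
  "Aop G k l U d = (\<lambda>i. if i \<in> U then G0_mul G k l d i else 0)"

lemma G0_mul_addv: "G0_mul G k l (addv d e) i = G0_mul G k l d i + G0_mul G k l e i"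
  by (simp add: G0_mul_def addv_def distrib_left sum.distrib del: add_bit_eq_xor mult_bit_eq_and)

lemma G0_mul_addv': "G0_mul G k l (\<lambda>j. d j + e j) i = G0_mul G k l d i + G0_mul G k l e i"
  using G0_mul_addv[of G k l d e i] by (simp add: addv_def)

lemma G0_mul_zero: "G0_mul G k l (\<lambda>_. 0) i = 0"
  by (simp add: G0_mul_def)

lemma Aop_addv: "Aop G k l U (addv d e) = addv (Aop G k l U d) (Aop G k l U e)"
  by (auto simp: Aop_def addv_def G0_mul_addv' simp del: add_bit_eq_xor mult_bit_eq_and)

lemma vecs_addv: "d \<in> vecs l \<Longrightarrow> e \<in> vecs l \<Longrightarrow> addv d e \<in> vecs l"
  by (simp add: vecs_def addv_def)

lemma addv_cancel: "addv d (addv d e) = e"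
  by (auto simp: addv_def simp del: add_bit_eq_xor mult_bit_eq_and intro!: ext)

lemma addv_self: "addv d d = (\<lambda>_. 0)"
  by (simp add: addv_def del: add_bit_eq_xor mult_bit_eq_and)

lemma addv_zero: "addv d (\<lambda>_. 0) = d"
  by (simp add: addv_def del: add_bit_eq_xor mult_bit_eq_and)

lemma img_ker:
  "card (Aop G k l U ` vecs l) * card {d \<in> vecs l. Aop G k l U d = (\<lambda>_. 0)} = 2 ^ l"
proof -
  define A where "A = Aop G k l U"
  define K where "K = {d \<in> vecs l. A d = (\<lambda>_. 0)}"
  define I where "I = A ` vecs l"
  have finI: "finite I" by (simp add: I_def finite_vecs)
  have finK: "finite K" by (simp add: K_def finite_vecs)
  have fib: "card {d \<in> vecs l. A d = w} = card K" if w: "w \<in> I" for w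
  proof -
    obtain d0 where d0: "d0 \<in> vecs l" "A d0 = w" using w by (auto simp: I_def)
    have eq: "{d \<in> vecs l. A d = w} = addv d0 ` K"
    proof
      show "{d \<in> vecs l. A d = w} \<subseteq> addv d0 ` K"
      proof
        fix d assume d: "d \<in> {d \<in> vecs l. A d = w}"
        have "addv d0 d \<in> K"
          using d d0 by (simp add: K_def vecs_addv A_def Aop_addv addv_self)
        moreover have "d = addv d0 (addv d0 d)" by (simp add: addv_cancel)
        ultimately show "d \<in> addv d0 ` K" by blast
      qed
    next
      show "addv d0 ` K \<subseteq> {d \<in> vecs l. A d = w}"
        using d0 by (auto simp: K_def vecs_addv A_def Aop_addv addv_zero)
    qed
    have inj: "inj_on (addv d0) K"
      by (rule inj_onI) (metis addv_cancel)
    show ?thesis using eq card_image[OF inj] by simp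
  qed
  have un: "vecs l = (\<Union>w\<in>I. {d \<in> vecs l. A d = w})" by (auto simp: I_def)
  have "card (vecs l) = (\<Sum>w\<in>I. card {d \<in> vecs l. A d = w})"
    by (subst un, rule card_UN_disjoint) (auto simp: finI finite_vecs)
  also have "\<dots> = card I * card K" using fib by simp
  finally show ?thesis by (simp add: card_vecs I_def K_def A_def)
qed

lemma sum_shift:
  fixes k l :: nat and G :: "nat \<Rightarrow> nat \<Rightarrow> bit"
  shows "(\<Sum>j<k+l. G i j * (if k \<le> j then d (j-k) else 0)) = (\<Sum>j<l. G i (k+j) * (d j :: bit))"
proof (induction l)
  case 0
  then show ?case by (simp del: add_bit_eq_xor mult_bit_eq_and)
next
  case (Suc l)
  then show ?case by (simp del: add_bit_eq_xor mult_bit_eq_and)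
qed

lemma card_filter_sum: "finite S \<Longrightarrow> real (card {x \<in> S. P x}) = (\<Sum>x\<in>S. if P x then 1 else 0)"
  by (simp add: sum.If_cases Int_def)

lemma ker_count:
  assumes U: "U \<subseteq> {..<n}" and d: "d \<in> vecs l" "d \<noteq> (\<lambda>_. 0)"
  shows "card {G \<in> mats n (k+l). Aop G k l U d = (\<lambda>_. 0)} * 2 ^ card U = card (mats n (k+l))"
proof -
  define x where "x = (\<lambda>j. if k \<le> j then d (j-k) else (0::bit))"
  obtain j1 where j1: "d j1 \<noteq> 0" using d(2) by (auto simp: fun_eq_iff)
  have j1l: "j1 < l" using j1 d(1) unfolding vecs_def by (metis (mono_tags, lifting) mem_Collect_eq not_le)
  have x0: "x (k + j1) = 1" using j1 by (simp add: x_def)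
  have "{G \<in> mats n (k+l). Aop G k l U d = (\<lambda>_. 0)} =
        {G \<in> mats n (k+l). \<forall>i\<in>U. (\<Sum>j<k+l. G i j * x j) = 0}"
    by (auto simp: Aop_def x_def sum_shift G0_mul_def fun_eq_iff simp del: add_bit_eq_xor mult_bit_eq_and)
  thus ?thesis using KL[where x=x and jj="k+j1" and N="k+l" and R=U and n=n, OF x0 _ U] j1l by simp
qed

lemma enc_count:
  assumes U: "U \<subseteq> {..<n}"
  shows "real (card {G \<in> mats n (k+l). Aop G k l U ` vecs l \<noteq> zf U})
          \<le> real (card (mats n (k+l))) * 2 ^ card U / 2 ^ l"
proof -
  define M where "M = mats n (k+l)"
  define u where "u = card U"
  define Kc where "Kc = (\<lambda>G. card {d \<in> vecs l. Aop G k l U d = (\<lambda>_. 0)})"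
  define Bad where "Bad = {G \<in> M. Aop G k l U ` vecs l \<noteq> zf U}"
  define c :: real where "c = 2 ^ l / 2 ^ u"
  have finU: "finite U" using U finite_subset by blast
  have finM: "finite M" by (simp add: M_def finite_mats)
  have cpos: "c > 0" by (simp add: c_def)
  have lowb: "real (Kc G) \<ge> c \<and> (Aop G k l U ` vecs l \<noteq> zf U \<longrightarrow> real (Kc G) \<ge> 2 * c)" for G
  proof -
    define I where "I = Aop G k l U ` vecs l"
    have IK: "card I * Kc G = 2 ^ l" by (simp add: I_def Kc_def img_ker)
    then have "card I dvd 2 ^ l" by (metis dvd_triv_left)
    then obtain a where a: "a \<le> l" "card I = 2 ^ a"
      using divides_primepow_nat[OF two_is_prime_nat] by blast
    have sub: "I \<subseteq> zf U" by (auto simp: I_def Aop_def zf_def)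
    have "card I \<le> 2 ^ u" using card_mono[OF finite_zf[OF finU] sub] card_zf[OF finU] by (simp add: u_def)
    hence au: "a \<le> u" using a by simp
    have "real (card I) * real (Kc G) = 2 ^ l" using arg_cong[OF IK, of real] by simp
    hence Kr: "real (Kc G) = 2 ^ l / 2 ^ a" using a by (simp add: field_simps)
    have "(2::real) ^ l / 2 ^ u \<le> 2 ^ l / 2 ^ a"
      using au by (intro divide_left_mono) (auto intro: power_increasing)
    moreover have "2 * c \<le> real (Kc G)" if bad: "I \<noteq> zf U"
    proof -
      have "card I < card (zf U)"
        using psubset_card_mono[OF finite_zf[OF finU]] sub bad by blast
      hence "a < u" using a card_zf[OF finU] by (simp add: u_def)
      hence "(2::real) ^ (a+1) \<le> 2 ^ u" by (intro power_increasing) auto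
      hence "2 * (2::real) ^ l / 2 ^ u \<le> 2 ^ l / 2 ^ a"
        by (simp add: field_simps)
      thus ?thesis by (simp add: Kr c_def)
    qed
    ultimately show ?thesis by (simp add: Kr c_def I_def)
  qed
  have swap: "(\<Sum>G\<in>M. real (Kc G)) = (\<Sum>d\<in>vecs l. real (card {G \<in> M. Aop G k l U d = (\<lambda>_. 0)}))"
  proof -
    have "(\<Sum>G\<in>M. real (Kc G)) = (\<Sum>G\<in>M. \<Sum>d\<in>vecs l. if Aop G k l U d = (\<lambda>_. 0) then 1 else 0)"
      by (simp add: Kc_def card_filter_sum finite_vecs)
    also have "\<dots> = (\<Sum>d\<in>vecs l. \<Sum>G\<in>M. if Aop G k l U d = (\<lambda>_. 0) then 1 else 0)"
      by (rule sum.swap)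
    also have "\<dots> = (\<Sum>d\<in>vecs l. real (card {G \<in> M. Aop G k l U d = (\<lambda>_. 0)}))"
      by (simp add: card_filter_sum finM)
    finally show ?thesis .
  qed
  have zero_in: "(\<lambda>_. 0) \<in> vecs l" by (simp add: vecs_def)
  have term0: "real (card {G \<in> M. Aop G k l U (\<lambda>_. 0) = (\<lambda>_. 0)}) = real (card M)"
  proof -
    have "Aop G k l U (\<lambda>_. 0) = (\<lambda>_. 0)" for G by (rule ext) (simp add: Aop_def G0_mul_def)
    thus ?thesis by simp
  qed
  have termd: "real (card {G \<in> M. Aop G k l U d = (\<lambda>_. 0)}) = real (card M) / 2 ^ u"
    if "d \<in> vecs l - {(\<lambda>_. 0)}" for d
  proof -
    have dd: "d \<in> vecs l" "d \<noteq> (\<lambda>_. 0)" using that by auto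
    have "card {G \<in> M. Aop G k l U d = (\<lambda>_. 0)} * 2 ^ u = card M"
      using ker_count[OF U dd, of k] unfolding M_def u_def .
    hence "real (card {G \<in> M. Aop G k l U d = (\<lambda>_. 0)}) * 2 ^ u = real (card M)"
      using arg_cong[of _ _ real] by fastforce
    thus ?thesis by (simp add: field_simps)
  qed
  have "(\<Sum>d\<in>vecs l. real (card {G \<in> M. Aop G k l U d = (\<lambda>_. 0)}))
        = real (card M) + (\<Sum>d\<in>vecs l - {(\<lambda>_. 0)}. real (card M) / 2 ^ u)"
    using zero_in term0 termd by (simp add: sum.remove[OF finite_vecs zero_in])
  also have "\<dots> = real (card M) + (2 ^ l - 1) * real (card M) / 2 ^ u"
    using zero_in by (simp add: card_vecs finite_vecs card_Diff_singleton)
  finally have S: "(\<Sum>G\<in>M. real (Kc G)) = real (card M) + (2 ^ l - 1) * real (card M) / 2 ^ u"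
    using swap by simp
  have "(\<Sum>G\<in>M. (real (Kc G) - c)) = real (card M) + (2 ^ l - 1) * real (card M) / 2 ^ u - real (card M) * c"
    by (simp add: sum_subtractf S)
  also have "\<dots> = real (card M) - real (card M) / 2 ^ u"
    by (simp add: c_def field_simps)
  also have "\<dots> \<le> real (card M)" by simp
  finally have T: "(\<Sum>G\<in>M. (real (Kc G) - c)) \<le> real (card M)" .
  have "real (card Bad) * c = (\<Sum>G\<in>Bad. c)" by simp
  also have "\<dots> \<le> (\<Sum>G\<in>Bad. (real (Kc G) - c))"
    using lowb by (intro sum_mono) (fastforce simp: Bad_def)
  also have "\<dots> \<le> (\<Sum>G\<in>M. (real (Kc G) - c))"
    using lowb finM by (intro sum_mono2) (auto simp: Bad_def)
  also have "\<dots> \<le> real (card M)" by (rule T)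
  finally have "real (card Bad) * c \<le> real (card M)" .
  hence "real (card Bad) \<le> real (card M) / c" using cpos by (simp add: field_simps)
  thus ?thesis by (simp add: Bad_def M_def c_def u_def)
qed




lemma dec_count:
  assumes V: "V \<subseteq> {..<n}"
  shows "real (card {G \<in> mats n N. \<exists>x\<in>vecs N. x \<noteq> (\<lambda>_. 0) \<and> (\<forall>i\<in>V. (\<Sum>j<N. G i j * x j) = 0)})
         \<le> real (card (mats n N)) * 2 ^ N / 2 ^ card V"
proof -
  define E where "E = (\<lambda>x. {G \<in> mats n N. \<forall>i\<in>V. (\<Sum>j<N. G i j * x j) = 0})"
  define X where "X = vecs N - {(\<lambda>_. 0)}"
  have finX: "finite X" by (simp add: X_def finite_vecs)
  have sub: "{G \<in> mats n N. \<exists>x\<in>vecs N. x \<noteq> (\<lambda>_. 0) \<and> (\<forall>i\<in>V. (\<Sum>j<N. G i j * x j) = 0)}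
             \<subseteq> (\<Union>x\<in>X. E x)" by (auto simp: E_def X_def)
  have fin: "finite (\<Union>x\<in>X. E x)" using finX by (auto simp: E_def finite_mats)
  have Ex: "real (card (E x)) = real (card (mats n N)) / 2 ^ card V" if x: "x \<in> X" for x
  proof -
    obtain j where j: "x j \<noteq> 0" using x by (auto simp: X_def fun_eq_iff)
    have jN: "j < N" using j x unfolding X_def vecs_def by (metis (mono_tags, lifting) DiffD1 mem_Collect_eq not_le)
    have x1: "x j = 1" using j by simp
    have "card (E x) * 2 ^ card V = card (mats n N)"
      unfolding E_def by (rule KL[where x=x and jj=j and N=N and R=V and n=n, OF x1 jN V])
    hence "real (card (E x)) * 2 ^ card V = real (card (mats n N))"
      using arg_cong[of _ _ real] by fastforce
    thus ?thesis by (simp add: field_simps)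
  qed
  have "real (card {G \<in> mats n N. \<exists>x\<in>vecs N. x \<noteq> (\<lambda>_. 0) \<and> (\<forall>i\<in>V. (\<Sum>j<N. G i j * x j) = 0)})
        \<le> real (card (\<Union>x\<in>X. E x))" using card_mono[OF fin sub] by simp
  also have "\<dots> \<le> real (\<Sum>x\<in>X. card (E x))" using card_UN_le[OF finX, of E] by linarith
  also have "\<dots> = (\<Sum>x\<in>X. real (card (mats n N)) / 2 ^ card V)" using Ex by simp
  also have "\<dots> = real (card X) * (real (card (mats n N)) / 2 ^ card V)" by simp
  also have "\<dots> \<le> 2 ^ N * (real (card (mats n N)) / 2 ^ card V)"
  proof (rule mult_right_mono)
    have "card X \<le> card (vecs N)" unfolding X_def by (rule card_mono[OF finite_vecs]) auto
    thus "real (card X) \<le> 2 ^ N" by (simp add: card_vecs)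
  qed simp
  also have "\<dots> = real (card (mats n N)) * 2 ^ N / 2 ^ card V" by simp
  finally show ?thesis .
qed

lemma sum_split:
  fixes k l :: nat
  shows "(\<Sum>j<k+l. f j) = (\<Sum>j<k. f j) + (\<Sum>j<l. (f (k+j) :: 'a::comm_monoid_add))"
  by (induction l) (simp_all add: add.assoc)

lemma bit_eq_of_add0: "(a::bit) + b = 0 \<Longrightarrow> a = b"
  by (cases a; cases b) auto

definition Uset :: "nat \<Rightarrow> (nat \<Rightarrow> cell) \<Rightarrow> nat set" where
  "Uset n st = {i. i < n \<and> fst (st i)}"
definition Vset :: "nat \<Rightarrow> (nat \<Rightarrow> cell) \<Rightarrow> nat set" where
  "Vset n st = {i. i < n \<and> \<not> snd (snd (st i))}"

lemma fail_imp:
  assumes m: "m \<in> vecs k" and F: "recovery_failure n k l m G st"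
  shows "Aop G k l (Uset n st) ` vecs l \<noteq> zf (Uset n st) \<or>
         (\<exists>x\<in>vecs (k+l). x \<noteq> (\<lambda>_. 0) \<and> (\<forall>i\<in>Vset n st. (\<Sum>j<k+l. G i j * x j) = 0))"
proof (rule ccontr)
  assume "\<not> ?thesis"
  hence surj: "Aop G k l (Uset n st) ` vecs l = zf (Uset n st)"
    and inj: "\<And>x. x \<in> vecs (k+l) \<Longrightarrow> x \<noteq> (\<lambda>_. 0) \<Longrightarrow> \<exists>i\<in>Vset n st. (\<Sum>j<k+l. G i j * x j) \<noteq> 0"
    by auto
  define U where "U = Uset n st"
  define V where "V = Vset n st"
  define s where "s = (\<lambda>i. fst (snd (st i)))"
  define b where "b = (\<lambda>i. G1_mul G k m i + s i)"
  define P where "P = (\<lambda>d. d \<in> vecs l \<and> (\<forall>i\<in>U. G0_mul G k l d i = b i))"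
  define d where "d = (SOME d. P d)"
  define c where "c = (\<lambda>i. G1_mul G k m i + G0_mul G k l d i)"
  define stored where "stored = (\<lambda>i. if i \<in> U then s i else c i)"
  define Sol where "Sol = {(m', d'). m' \<in> vecs k \<and> d' \<in> vecs l \<and>
                  (\<forall>i\<in>V. G1_mul G k m' i + G0_mul G k l d' i = stored i)}"
  have Fexp: "\<not> (\<exists>d\<in>vecs l. \<forall>i\<in>U. G0_mul G k l d i = b i) \<or> (\<exists>x\<in>Sol. \<exists>x'\<in>Sol. fst x \<noteq> fst x') \<or> (m, d) \<notin> Sol"
    using F unfolding recovery_failure_def Let_def U_def V_def s_def b_def d_def P_def c_def stored_def Sol_def Uset_def Vset_def .
  have ex: "\<exists>d. P d"
  proof -
    have "(\<lambda>i. if i \<in> U then b i else 0) \<in> Aop G k l U ` vecs l"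
      using surj by (simp add: U_def zf_def)
    then obtain d0 where d0: "d0 \<in> vecs l" "(\<lambda>i. if i \<in> U then b i else 0) = Aop G k l U d0"
      by (rule imageE) blast
    have "\<forall>i\<in>U. G0_mul G k l d0 i = b i"
    proof
      fix i assume "i \<in> U"
      thus "G0_mul G k l d0 i = b i" using fun_cong[OF d0(2), of i, symmetric] by (simp add: Aop_def)
    qed
    thus ?thesis using d0 by (auto simp: P_def)
  qed
  have Pd: "P d" unfolding d_def using ex by (rule someI_ex)
  have encok: "\<exists>d\<in>vecs l. \<forall>i\<in>U. G0_mul G k l d i = b i" using Pd by (auto simp: P_def)
  have mdSol: "(m, d) \<in> Sol"
  proof -
    have "G1_mul G k m i + G0_mul G k l d i = stored i" if "i \<in> V" for i
    proof (cases "i \<in> U")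
      case True
      hence "G0_mul G k l d i = G1_mul G k m i + s i" using Pd by (simp add: P_def b_def)
      thus ?thesis using True by (simp add: stored_def add.assoc[symmetric] del: add_bit_eq_xor mult_bit_eq_and)
    next
      case False thus ?thesis by (simp add: stored_def c_def)
    qed
    thus ?thesis using m Pd by (simp add: Sol_def P_def)
  qed
  have uniq: "fst x = fst x'" if x: "x \<in> Sol" and x': "x' \<in> Sol" for x x'
  proof (rule ccontr)
    assume ne: "fst x \<noteq> fst x'"
    obtain m1 d1 where x1: "x = (m1, d1)" by (cases x)
    obtain m2 d2 where x2: "x' = (m2, d2)" by (cases x')
    have s1: "m1 \<in> vecs k" "d1 \<in> vecs l" "\<And>i. i \<in> V \<Longrightarrow> G1_mul G k m1 i + G0_mul G k l d1 i = stored i"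
      using x x1 by (auto simp: Sol_def)
    have s2: "m2 \<in> vecs k" "d2 \<in> vecs l" "\<And>i. i \<in> V \<Longrightarrow> G1_mul G k m2 i + G0_mul G k l d2 i = stored i"
      using x' x2 by (auto simp: Sol_def)
    define y where "y = (\<lambda>j. if j < k then m1 j + m2 j else d1 (j - k) + d2 (j - k))"
    have yv: "y \<in> vecs (k+l)"
      using s1(2) s2(2) by (auto simp: vecs_def y_def)
    obtain j where j: "m1 j \<noteq> m2 j" using ne x1 x2 by (auto simp: fun_eq_iff)
    have jk: "j < k"
    proof (rule ccontr)
      assume "\<not> j < k"
      hence "m1 j = 0" "m2 j = 0" using s1(1) s2(1) by (auto simp: vecs_def)
      thus False using j by simp
    qed
    have yne: "y \<noteq> (\<lambda>_. 0)"
    proof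
      assume "y = (\<lambda>_. 0)"
      hence "m1 j + m2 j = 0" using jk by (metis y_def)
      thus False using j bit_eq_of_add0 by blast
    qed
    obtain i where i: "i \<in> V" "(\<Sum>j<k+l. G i j * y j) \<noteq> 0"
      using inj[OF yv yne] unfolding V_def by blast
    have "(\<Sum>j<k+l. G i j * y j) = (\<Sum>j<k. G i j * y j) + (\<Sum>j<l. G i (k+j) * y (k+j))"
      by (rule sum_split)
    also have "\<dots> = (\<Sum>j<k. G i j * (m1 j + m2 j)) + (\<Sum>j<l. G i (k+j) * (d1 j + d2 j))"
      by (simp add: y_def del: add_bit_eq_xor mult_bit_eq_and)
    also have "\<dots> = (G1_mul G k m1 i + G0_mul G k l d1 i) + (G1_mul G k m2 i + G0_mul G k l d2 i)"
      by (simp add: G1_mul_def G0_mul_def distrib_left sum.distrib algebra_simps del: add_bit_eq_xor mult_bit_eq_and)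
    also have "\<dots> = 0" using s1(3)[OF i(1)] s2(3)[OF i(1)] by simp
    finally show False using i(2) by simp
  qed
  show False using Fexp encok mdSol uniq by blast
qed




lemma pair_section_bound:
  assumes c: "c \<ge> 0" and sec: "\<And>b. b \<in> set_pmf B \<Longrightarrow> measure_pmf.prob A {a. (a,b) \<in> S} \<le> c"
  shows "measure_pmf.prob (pair_pmf A B) S \<le> c"
proof -
  have eq: "pair_pmf A B = bind_pmf B (\<lambda>b. map_pmf (\<lambda>a. (a,b)) A)"
    by (subst pair_commute_pmf) (simp add: pair_pmf_def map_pmf_def bind_assoc_pmf bind_return_pmf)
  have "emeasure (measure_pmf (pair_pmf A B)) S
        = (\<integral>\<^sup>+b. emeasure (measure_pmf (map_pmf (\<lambda>a. (a,b)) A)) S \<partial>measure_pmf B)"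
    by (simp add: eq)
  also have "\<dots> \<le> (\<integral>\<^sup>+b. ennreal c \<partial>measure_pmf B)"
  proof (rule nn_integral_mono_AE)
    show "AE b in measure_pmf B. emeasure (measure_pmf (map_pmf (\<lambda>a. (a,b)) A)) S \<le> ennreal c"
      unfolding AE_measure_pmf_iff
    proof
      fix b assume b: "b \<in> set_pmf B"
      have "emeasure (measure_pmf (map_pmf (\<lambda>a. (a,b)) A)) S = ennreal (measure_pmf.prob A {a. (a,b) \<in> S})"
        by (simp add: measure_pmf.emeasure_eq_measure vimage_def)
      thus "emeasure (measure_pmf (map_pmf (\<lambda>a. (a,b)) A)) S \<le> ennreal c"
        using sec[OF b] by (simp add: ennreal_leI)
    qed
  qed
  also have "\<dots> = ennreal c" by (simp add: measure_pmf.emeasure_space_1)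
  finally have "ennreal (measure_pmf.prob (pair_pmf A B) S) \<le> ennreal c"
    by (simp add: measure_pmf.emeasure_eq_measure)
  thus ?thesis using c by (simp add: ennreal_le_iff)
qed

lemma map_cell_fst: "map_pmf fst (cell_pmf \<beta> \<alpha>) = bernoulli_pmf \<beta>"
  by (simp add: cell_pmf_def map_bind_pmf bind_return_pmf')

lemma map_cell_er: "map_pmf (\<lambda>c. snd (snd c)) (cell_pmf \<beta> \<alpha>) = bernoulli_pmf \<alpha>"
  by (simp add: cell_pmf_def map_bind_pmf bind_return_pmf')

lemma count_binom:
  assumes p: "p \<in> {0..1}" and fm: "map_pmf f (cell_pmf \<beta> \<alpha>) = bernoulli_pmf p"
    and fd: "f (False, 0, False) = False"
  shows "map_pmf (\<lambda>st. card {i \<in> {..<n}. f (st i)}) (Pi_pmf {..<n} (False, 0, False) (\<lambda>_. cell_pmf \<beta> \<alpha>))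
         = binomial_pmf n p"
proof -
  have "binomial_pmf n p = map_pmf (\<lambda>g. card {x\<in>{..<n}. g x}) (Pi_pmf {..<n} False (\<lambda>_. bernoulli_pmf p))"
    by (rule binomial_pmf_altdef') (use p in auto)
  also have "Pi_pmf {..<n} False (\<lambda>_. bernoulli_pmf p) = Pi_pmf {..<n} False (\<lambda>_. map_pmf f (cell_pmf \<beta> \<alpha>))"
    by (simp add: fm)
  also have "\<dots> = map_pmf (\<lambda>h. f \<circ> h) (Pi_pmf {..<n} (False, 0, False) (\<lambda>_. cell_pmf \<beta> \<alpha>))"
    by (rule Pi_pmf_map) (auto simp: fd)
  finally have "binomial_pmf n p = map_pmf (\<lambda>g. card {x\<in>{..<n}. g x}) (map_pmf (\<lambda>h. f \<circ> h) (Pi_pmf {..<n} (False, 0, False) (\<lambda>_. cell_pmf \<beta> \<alpha>)))" .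
  thus ?thesis unfolding pmf.map_comp o_def by (rule sym)
qed


lemma pow2_div: "(2::real) ^ a / 2 ^ b = 2 powr (real a - real b)"
  by (simp add: powr_diff powr_realpow)

lemma per_n_bound:
  fixes \<alpha> \<beta> \<epsilon> :: real
  assumes n: "n > 0" and a: "0 \<le> \<alpha>" "\<alpha> \<le> 1" and b: "0 \<le> \<beta>" "\<beta> \<le> 1" and e: "\<epsilon> > 0"
    and m: "m \<in> vecs k"
    and hl: "(\<beta> + 2*\<epsilon>) * n \<le> real l" and hkl: "real (k+l) \<le> (1 - \<alpha> - 2*\<epsilon>) * n"
  shows "failure_prob \<beta> \<alpha> n k l m \<le> 2 * 2 powr (-(\<epsilon> * n)) + 2 * exp (-2 * real n * \<epsilon>^2)"
proof -
  define M where "M = mats n (k+l)"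
  define A where "A = pmf_of_set M"
  define P where "P = Pi_pmf {..<n} (False, 0::bit, False) (\<lambda>_. cell_pmf \<beta> \<alpha>)"
  define Ec where "Ec = (\<lambda>st::nat\<Rightarrow>cell. card {i \<in> {..<n}. snd (snd (st i))})"
  define Uc where "Uc = (\<lambda>st::nat\<Rightarrow>cell. card {i \<in> {..<n}. fst (st i)})"
  define good where "good = (\<lambda>st. real (Uc st) / n < \<beta> + \<epsilon> \<and> real (Ec st) / n < \<alpha> + \<epsilon>)"
  define F where "F = {(G, st). recovery_failure n k l m G st}"
  define F1 where "F1 = {(G, st). recovery_failure n k l m G st \<and> good st}"
  define F2 where "F2 = {(G::nat\<Rightarrow>nat\<Rightarrow>bit, st). \<not> good st}"
  define c where "c = 2 powr (-(\<epsilon> * n))"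
  have finM: "finite M" and neM: "M \<noteq> {}" by (simp_all add: M_def finite_mats mats_ne)
  have fp: "failure_prob \<beta> \<alpha> n k l m = measure_pmf.prob (pair_pmf A P) F"
    by (simp add: failure_prob_def bdec_space_def A_def P_def M_def F_def)
  have split: "measure_pmf.prob (pair_pmf A P) F
        \<le> measure_pmf.prob (pair_pmf A P) F1 + measure_pmf.prob (pair_pmf A P) F2"
  proof -
    have "measure_pmf.prob (pair_pmf A P) F \<le> measure_pmf.prob (pair_pmf A P) (F1 \<union> F2)"
      by (rule measure_pmf.finite_measure_mono) (auto simp: F_def F1_def F2_def)
    also have "\<dots> \<le> measure_pmf.prob (pair_pmf A P) F1 + measure_pmf.prob (pair_pmf A P) F2"
      by (rule measure_Un_le) auto
    finally show ?thesis .
  qed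
  have F2eq: "measure_pmf.prob (pair_pmf A P) F2 = measure_pmf.prob P {st. \<not> good st}"
  proof -
    have "measure_pmf.prob P {st. \<not> good st} = measure_pmf.prob (map_pmf snd (pair_pmf A P)) {st. \<not> good st}"
      by (simp add: map_snd_pair_pmf)
    also have "snd -` {st. \<not> good st} = F2" by (auto simp: F2_def)
    hence "measure_pmf.prob (map_pmf snd (pair_pmf A P)) {st. \<not> good st} = measure_pmf.prob (pair_pmf A P) F2"
      by simp
    finally show ?thesis by simp
  qed
  have binU: "map_pmf Uc P = binomial_pmf n \<beta>"
    unfolding Uc_def P_def by (rule count_binom) (use b in \<open>auto simp: map_cell_fst\<close>)
  have binE: "map_pmf Ec P = binomial_pmf n \<alpha>"
    unfolding Ec_def P_def by (rule count_binom) (use a in \<open>auto simp: map_cell_er\<close>)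
  have pU: "measure_pmf.prob P {st. \<beta> + \<epsilon> \<le> real (Uc st) / n} \<le> exp (-2 * real n * \<epsilon>^2)"
  proof -
    interpret binomial_distribution n \<beta> by unfold_locales (use b in auto)
    have "measure_pmf.prob P {st. \<beta> + \<epsilon> \<le> real (Uc st) / n} = measure_pmf.prob (map_pmf Uc P) {x. \<beta> + \<epsilon> \<le> real x / n}"
      by (simp add: vimage_def)
    also have "\<dots> \<le> exp (-2 * real n * \<epsilon>^2)" unfolding binU using prob_ge'[OF n, of \<epsilon>] e by simp
    finally show ?thesis .
  qed
  have pE: "measure_pmf.prob P {st. \<alpha> + \<epsilon> \<le> real (Ec st) / n} \<le> exp (-2 * real n * \<epsilon>^2)"
  proof -
    interpret binomial_distribution n \<alpha> by unfold_locales (use a in auto)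
    have "measure_pmf.prob P {st. \<alpha> + \<epsilon> \<le> real (Ec st) / n} = measure_pmf.prob (map_pmf Ec P) {x. \<alpha> + \<epsilon> \<le> real x / n}"
      by (simp add: vimage_def)
    also have "\<dots> \<le> exp (-2 * real n * \<epsilon>^2)" unfolding binE using prob_ge'[OF n, of \<epsilon>] e by simp
    finally show ?thesis .
  qed
  have pbad: "measure_pmf.prob P {st. \<not> good st} \<le> 2 * exp (-2 * real n * \<epsilon>^2)"
  proof -
    have "measure_pmf.prob P {st. \<not> good st}
          \<le> measure_pmf.prob P ({st. \<beta> + \<epsilon> \<le> real (Uc st) / n} \<union> {st. \<alpha> + \<epsilon> \<le> real (Ec st) / n})"
      by (rule measure_pmf.finite_measure_mono) (auto simp: good_def)
    also have "\<dots> \<le> measure_pmf.prob P {st. \<beta> + \<epsilon> \<le> real (Uc st) / n} + measure_pmf.prob P {st. \<alpha> + \<epsilon> \<le> real (Ec st) / n}"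
      by (rule measure_Un_le) auto
    also have "\<dots> \<le> 2 * exp (-2 * real n * \<epsilon>^2)" using pU pE by simp
    finally show ?thesis .
  qed
  have pF1: "measure_pmf.prob (pair_pmf A P) F1 \<le> c + c"
  proof (rule pair_section_bound)
    show "0 \<le> c + c" by (simp add: c_def)
  next
    fix st assume st: "st \<in> set_pmf P"
    show "measure_pmf.prob A {G. (G, st) \<in> F1} \<le> c + c"
    proof (cases "good st")
      case False
      hence "{G. (G, st) \<in> F1} = {}" by (auto simp: F1_def)
      thus ?thesis by (simp add: c_def)
    next
      case True
      define U where "U = Uset n st"
      define V where "V = Vset n st"
      have U: "U \<subseteq> {..<n}" and V: "V \<subseteq> {..<n}" by (auto simp: U_def V_def Uset_def Vset_def)
      have cU: "card U = Uc st" by (simp add: U_def Uset_def Uc_def)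
      have cV: "card V + Ec st = n"
      proof -
        have "V \<union> {i \<in> {..<n}. snd (snd (st i))} = {..<n}" by (auto simp: V_def Vset_def)
        moreover have "V \<inter> {i \<in> {..<n}. snd (snd (st i))} = {}" by (auto simp: V_def Vset_def)
        ultimately show ?thesis using card_Un_disjoint[of V "{i \<in> {..<n}. snd (snd (st i))}"] V
          by (simp add: Ec_def finite_subset)
      qed
      define BE where "BE = {G \<in> mats n (k+l). Aop G k l U ` vecs l \<noteq> zf U}"
      define BD where "BD = {G \<in> mats n (k+l). \<exists>x\<in>vecs (k+l). x \<noteq> (\<lambda>_. 0) \<and> (\<forall>i\<in>V. (\<Sum>j<k+l. G i j * x j) = 0)}"
      have sub: "M \<inter> {G. (G, st) \<in> F1} \<subseteq> BE \<union> BD"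
        using fail_imp[OF m] by (auto simp: M_def F1_def BE_def BD_def U_def V_def)
      have finBE: "finite BE" and finBD: "finite BD" by (auto simp: BE_def BD_def finite_mats)
      have "real (card (M \<inter> {G. (G, st) \<in> F1})) \<le> real (card (BE \<union> BD))"
        using card_mono[OF _ sub] finBE finBD by simp
      also have "\<dots> \<le> real (card BE) + real (card BD)" using card_Un_le[of BE BD] by linarith
      also have "\<dots> \<le> real (card M) * 2 ^ card U / 2 ^ l + real (card M) * 2 ^ (k+l) / 2 ^ card V"
        using enc_count[OF U, of k l] dec_count[OF V, of "k+l"] by (simp add: BE_def BD_def M_def)
      finally have cnt: "real (card (M \<inter> {G. (G, st) \<in> F1})) \<le>
          real (card M) * (2 ^ card U / 2 ^ l + 2 ^ (k+l) / 2 ^ card V)" by (simp add: field_simps)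
      have cardMpos: "real (card M) > 0" using finM neM by (simp add: card_gt_0_iff)
      have "measure_pmf.prob A {G. (G, st) \<in> F1} = real (card (M \<inter> {G. (G, st) \<in> F1})) / real (card M)"
        unfolding A_def using finM neM by (simp add: measure_pmf_of_set)
      also have "\<dots> \<le> 2 ^ card U / 2 ^ l + 2 ^ (k+l) / 2 ^ card V"
        using cnt cardMpos by (simp add: divide_le_eq mult.commute)
      also have "\<dots> \<le> c + c"
      proof (rule add_mono)
        have "real (Uc st) < (\<beta> + \<epsilon>) * n" using True n by (simp add: good_def divide_less_eq)
        hence "real (card U) - real l \<le> -(\<epsilon> * n)" using hl cU by (simp add: algebra_simps)
        thus "(2::real) ^ card U / 2 ^ l \<le> c" unfolding pow2_div c_def by simp
      next
        have "real (Ec st) < (\<alpha> + \<epsilon>) * n" using True n by (simp add: good_def divide_less_eq)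
        moreover have "real (card V) = real n - real (Ec st)" using cV by linarith
        ultimately have "real (k + l) - real (card V) \<le> -(\<epsilon> * n)" using hkl by (simp add: algebra_simps)
        thus "(2::real) ^ (k+l) / 2 ^ card V \<le> c" unfolding pow2_div c_def by simp
      qed
      finally show ?thesis .
    qed
  qed
  show ?thesis using fp split F2eq pbad pF1 by (simp add: c_def)
qed




lemma lim_bound:
  fixes \<epsilon> :: real assumes e: "\<epsilon> > 0"
  shows "(\<lambda>n. 2 * 2 powr (-(\<epsilon> * real n)) + 2 * exp (-2 * real n * \<epsilon>^2)) \<longlonglongrightarrow> 0"
proof -
  have q1: "2 powr (-(\<epsilon> * real n)) = (2 powr (-\<epsilon>)) ^ n" for n
    by (simp add: powr_realpow[symmetric] powr_powr)
  have q2: "exp (-2 * real n * \<epsilon>^2) = (exp (-2 * \<epsilon>^2)) ^ n" for n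
    by (simp add: exp_of_nat_mult[symmetric] algebra_simps)
  have l1: "(\<lambda>n. (2 powr (-\<epsilon>)) ^ n) \<longlonglongrightarrow> (0::real)"
    by (rule LIMSEQ_power_zero) (use e in \<open>auto simp: powr_minus divide_simps\<close>)
  have l2: "(\<lambda>n. (exp (-2 * \<epsilon>^2)) ^ n) \<longlonglongrightarrow> (0::real)"
    by (rule LIMSEQ_power_zero) (use e in auto)
  have "(\<lambda>n. 2 * (2 powr (-\<epsilon>)) ^ n + 2 * (exp (-2 * \<epsilon>^2)) ^ n) \<longlonglongrightarrow> (0 :: real)"
    using tendsto_add[OF tendsto_mult[OF tendsto_const l1] tendsto_mult[OF tendsto_const l2], of 2 2] by simp
  thus ?thesis unfolding q1 q2 .
qed

theorem theorem3:
  fixes \<alpha> \<beta> :: real and k l :: "nat \<Rightarrow> nat" and m :: "nat \<Rightarrow> nat \<Rightarrow> bit"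
  assumes "0 \<le> \<alpha>" "\<alpha> < 1" "0 \<le> \<beta>" "\<beta> < 1" "\<alpha> + \<beta> < 1"
    and "liminf (\<lambda>n. ereal (real (l n) / real n)) > ereal \<beta>"
    and "limsup (\<lambda>n. ereal (real (k n + l n) / real n)) < ereal (1 - \<alpha>)"
    and "\<And>n. m n \<in> vecs (k n)"
  shows "(\<lambda>n. failure_prob \<beta> \<alpha> n (k n) (l n) (m n)) \<longlonglongrightarrow> 0"
proof -
  obtain r1 where r1: "ereal \<beta> < ereal r1" "ereal r1 < liminf (\<lambda>n. ereal (real (l n) / real n))"
    using ereal_dense2[OF assms(6)] by blast
  obtain r2 where r2: "limsup (\<lambda>n. ereal (real (k n + l n) / real n)) < ereal r2" "ereal r2 < ereal (1 - \<alpha>)"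
    using ereal_dense2[OF assms(7)] by blast
  define \<epsilon> where "\<epsilon> = min ((r1 - \<beta>) / 2) ((1 - \<alpha> - r2) / 2)"
  have e: "\<epsilon> > 0" using r1(1) r2(2) by (simp add: \<epsilon>_def)
  have ev1: "eventually (\<lambda>n. ereal r1 < ereal (real (l n) / real n)) sequentially"
    using less_LiminfD[OF r1(2)] .
  have ev2: "eventually (\<lambda>n. ereal (real (k n + l n) / real n) < ereal r2) sequentially"
    using Limsup_lessD[OF r2(1)] .
  have ev3: "eventually (\<lambda>n. n > (0::nat)) sequentially" by (rule eventually_gt_at_top)
  have evb: "eventually (\<lambda>n. failure_prob \<beta> \<alpha> n (k n) (l n) (m n)
      \<le> 2 * 2 powr (-(\<epsilon> * real n)) + 2 * exp (-2 * real n * \<epsilon>^2)) sequentially"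
    using ev1 ev2 ev3
  proof eventually_elim
    case (elim n)
    have nr: "real n > 0" using elim(3) by simp
    have "r1 * n < real (l n)" using elim(1) nr by (simp add: pos_less_divide_eq mult.commute)
    moreover have "(\<beta> + 2 * \<epsilon>) \<le> r1"
    proof -
      have "\<epsilon> \<le> (r1 - \<beta>) / 2" unfolding \<epsilon>_def by (rule min.cobounded1)
      thus ?thesis by (simp add: field_simps)
    qed
    ultimately have hl: "(\<beta> + 2 * \<epsilon>) * n \<le> real (l n)"
      by (smt (verit, best) mult_right_mono nr)
    have "real (k n + l n) < r2 * n" using elim(2) nr by (simp add: pos_divide_less_eq)
    moreover have "r2 \<le> 1 - \<alpha> - 2 * \<epsilon>"
    proof -
      have "\<epsilon> \<le> (1 - \<alpha> - r2) / 2" unfolding \<epsilon>_def by (rule min.cobounded2)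
      thus ?thesis by (simp add: field_simps)
    qed
    ultimately have hkl: "real (k n + l n) \<le> (1 - \<alpha> - 2 * \<epsilon>) * n"
      by (smt (verit, best) mult_right_mono nr)
    show ?case
      by (rule per_n_bound[OF elim(3) _ _ _ _ e assms(8) hl hkl]) (use assms in auto)
  qed
  show ?thesis
  proof (rule tendsto_sandwich[OF _ evb _ lim_bound[OF e]])
    show "eventually (\<lambda>n. 0 \<le> failure_prob \<beta> \<alpha> n (k n) (l n) (m n)) sequentially"
      by (simp add: failure_prob_def)
  qed simp
qed


end
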